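(* Let $n\ge2$, $m\in\mathbb{Z}_{>0}$, $q\in(-1,1)$. Let $\boldsymbol{\xi}\in\mathbb{R}^n$ with $\xi_j-\xi_k\notin2\pi\mathbb{Z}$ for $j\ne k$ satisfy \[ e^{im\xi_j}=(-1)^{n-1}\prod_{1\le k\le n,\,k\ne j}\frac{1-qe^{i(\xi_j-\xi_k)}}{e^{i(\xi_j-\xi_k)}-q}\qquad(j=1,\dots,n). \] Then for every $\mu$ in the $\mathbb{Z}$-span of $\omega_1,\dots,\omega_{n-1}$ with $\mu_1-\mu_n=m+1$, one has $P_{\texttt{a};\mu}(\boldsymbol{\xi};q)=q\,P_{\texttt{a};\mu-e_1+e_n}(\boldsymbol{\xi};q)$.
   Context: $e_1,\dots,e_n$ is the standard basis of $\mathbb{R}^n$, $\omega_j=e_1+\dots+e_j-\frac jn(e_1+\dots+e_n)$. $C_{\texttt{a}}(\boldsymbol{\xi};q)=\prod_{1\le j<k\le n}\frac{1-qe^{-i(\xi_j-\xi_k)}}{1-e^{-i(\xi_j-\xi_k)}}$ and $P_{\texttt{a};\mu}(\boldsymbol{\xi};q)=\sum_{\sigma\in S_n}C_{\texttt{a}}(\xi_{\sigma_1},\dots,\xi_{\sigma_n};q)\exp(i\xi_{\sigma_1}\mu_1+\dots+i\xi_{\sigma_n}\mu_n)$. *)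

theory Defs
  imports Complex_Main "HOL-Combinatorics.Permutations"
begin

text \<open>Vectors in R^n are represented as functions nat => real, indexed by 1..n.\<close>

definition omega :: "nat \<Rightarrow> nat \<Rightarrow> nat \<Rightarrow> real" where
  "omega n j l = (if l \<le> j then 1 else 0) - real j / real n"

definition weight_lattice :: "nat \<Rightarrow> (nat \<Rightarrow> real) set" where
  "weight_lattice n = {\<mu>. \<exists>c :: nat \<Rightarrow> int. \<forall>l\<in>{1..n}.
       \<mu> l = (\<Sum>j=1..n-1. of_int (c j) * omega n j l)}"

definition C_a :: "nat \<Rightarrow> (nat \<Rightarrow> real) \<Rightarrow> real \<Rightarrow> complex" where
  "C_a n \<xi> q = (\<Prod>j\<in>{1..n}. \<Prod>k\<in>{j<..n}.
      (1 - of_real q * exp (- \<i> * of_real (\<xi> j - \<xi> k))) /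
      (1 - exp (- \<i> * of_real (\<xi> j - \<xi> k))))"

definition P_a :: "nat \<Rightarrow> (nat \<Rightarrow> real) \<Rightarrow> real \<Rightarrow> (nat \<Rightarrow> real) \<Rightarrow> complex" where
  "P_a n \<xi> q \<mu> = (\<Sum>\<sigma> | \<sigma> permutes {1..n}.
      C_a n (\<lambda>l. \<xi> (\<sigma> l)) q * exp (\<i> * of_real (\<Sum>l=1..n. \<xi> (\<sigma> l) * \<mu> l)))"

end

theory Submission
  imports Defs "HOL-Analysis.Analysis"
begin


definition rinv :: "nat \<Rightarrow> nat \<Rightarrow> nat" where
  "rinv n l = (if 1 \<le> l \<and> l < n then Suc l else if l = n then 1 else l)"
definition rot :: "nat \<Rightarrow> nat \<Rightarrow> nat" where
  "rot n l = (if 2 \<le> l \<and> l \<le> n then l - 1 else if l = 1 then n else l)"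
definition tsw :: "nat \<Rightarrow> nat" where
  "tsw l = (if l = 1 then 2 else if l = 2 then 1 else l)"

lemma rinv_permutes: "2 \<le> n \<Longrightarrow> rinv n permutes {1..n}"
  apply (rule bij_imp_permutes)
   apply (rule bij_betw_byWitness[where f'="rot n"])
  by (auto simp: rinv_def rot_def)

lemma tsw_permutes: "2 \<le> n \<Longrightarrow> tsw permutes {1..n}"
  apply (rule bij_imp_permutes)
   apply (rule bij_betw_byWitness[where f'="tsw"])
  by (auto simp: tsw_def)

definition gq :: "real \<Rightarrow> real \<Rightarrow> complex" where
  "gq q t = (1 - of_real q * exp (- \<i> * of_real t)) / (1 - exp (- \<i> * of_real t))"
definition Bq :: "real \<Rightarrow> real \<Rightarrow> complex" where
  "Bq q t = (1 - of_real q * exp (\<i> * of_real t)) / (exp (\<i> * of_real t) - of_real q)"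

lemma C_alt: "C_a n y q = (\<Prod>j\<in>{1..n}. \<Prod>k\<in>{Suc j..n}. gq q (y j - y k))"
  by (simp add: C_a_def gq_def atLeastSucAtMost_greaterThanAtMost)

lemma exp_ne_q: assumes "\<bar>q\<bar> < 1" shows "exp (\<i> * of_real t) \<noteq> of_real q"
proof
  assume "exp (\<i> * of_real t) = of_real q"
  then have "norm (exp (\<i> * complex_of_real t)) = norm (complex_of_real q)" by simp
  then show False using assms by simp
qed

lemma g_neg:
  assumes "exp (\<i> * of_real t) \<noteq> 1" "\<bar>q\<bar> < 1"
  shows "gq q (-t) = - Bq q t * gq q t"
proof -
  define z where "z = exp (\<i> * of_real t)"
  have z0: "z \<noteq> 0" by (simp add: z_def)
  have z1: "z \<noteq> 1" using assms z_def by simp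
  have zq: "z - of_real q \<noteq> 0" using exp_ne_q[OF assms(2)] z_def by simp
  have em: "exp (- \<i> * of_real t) = 1 / z"
    by (simp add: z_def exp_minus field_simps)
  have ep: "exp (- \<i> * of_real (-t)) = z" by (simp add: z_def)
  have z1': "1 - z \<noteq> 0" "z - 1 \<noteq> 0" using z1 by auto
  have gt: "gq q t = (z - of_real q) / (z - 1)"
    unfolding gq_def em using z0 z1' by (simp add: field_simps)
  have gmt: "gq q (-t) = (1 - of_real q * z) / (1 - z)"
    unfolding gq_def ep by simp
  have "- Bq q t * gq q t = - ((1 - of_real q * z) / (z - of_real q)) * ((z - of_real q) / (z - 1))"
    unfolding gt Bq_def z_def by simp
  also have "\<dots> = - ((1 - of_real q * z) / (z - 1))"
    using zq by (simp add: minus_divide_left)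
  also have "\<dots> = (1 - of_real q * z) / (1 - z)"
    by (metis minus_diff_eq minus_divide_right)
  finally show ?thesis using gmt by simp
qed

lemma g_swap:
  assumes "exp (\<i> * of_real t) \<noteq> 1"
  shows "gq q (-t) * exp (\<i> * of_real t) * (1 - of_real q * exp (- \<i> * of_real t))
       = - gq q t * (1 - of_real q * exp (- \<i> * of_real (-t)))"
proof -
  define z where "z = exp (\<i> * of_real t)"
  have z0: "z \<noteq> 0" by (simp add: z_def)
  have z1: "1 - z \<noteq> 0" "z - 1 \<noteq> 0" using assms z_def by auto
  have em: "exp (- \<i> * of_real t) = 1 / z"
    by (simp add: z_def exp_minus field_simps)
  have ep: "exp (- \<i> * of_real (-t)) = z" by (simp add: z_def)
  show ?thesis unfolding gq_def em ep z_def[symmetric]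
    using z0 z1 by (simp add: field_simps)
qed

lemma C_split1:
  assumes "1 \<le> n"
  shows "C_a n y q = (\<Prod>k\<in>{2..n}. gq q (y 1 - y k)) * (\<Prod>j\<in>{2..n}. \<Prod>k\<in>{Suc j..n}. gq q (y j - y k))"
  using assms by (simp add: C_alt prod.atLeast_Suc_atMost numeral_2_eq_2)

lemma C_rot:
  assumes "2 \<le> n"
  shows "C_a n (\<lambda>l. y (rinv n l)) q = (\<Prod>k\<in>{2..n}. gq q (y k - y 1)) * (\<Prod>j\<in>{2..n}. \<Prod>k\<in>{Suc j..n}. gq q (y j - y k))"
proof -
  obtain n' where n: "n = Suc n'" and n1: "1 \<le> n'" using assms by (cases n) auto
  have F: "(\<Prod>k\<in>{Suc j..n}. gq q (y (rinv n j) - y (rinv n k))) =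
      (\<Prod>k\<in>{Suc j..n'}. gq q (y (Suc j) - y (Suc k))) * gq q (y (Suc j) - y 1)"
    if j: "j \<in> {1..n'}" for j
  proof -
    have "(\<Prod>k\<in>{Suc j..n}. gq q (y (rinv n j) - y (rinv n k))) =
      (\<Prod>k\<in>{Suc j..n'}. gq q (y (rinv n j) - y (rinv n k))) * gq q (y (rinv n j) - y (rinv n (Suc n')))"
      using j by (simp add: n prod.cl_ivl_Suc)
    also have "\<dots> = (\<Prod>k\<in>{Suc j..n'}. gq q (y (Suc j) - y (Suc k))) * gq q (y (Suc j) - y 1)"
      using j by (intro arg_cong2[where f="(*)"] prod.cong) (auto simp: rinv_def n)
    finally show ?thesis .
  qed
  have "C_a n (\<lambda>l. y (rinv n l)) q = (\<Prod>j\<in>{1..n'}. \<Prod>k\<in>{Suc j..n}. gq q (y (rinv n j) - y (rinv n k)))"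
    unfolding C_alt using n1 by (simp add: n prod.cl_ivl_Suc)
  also have "\<dots> = (\<Prod>j\<in>{1..n'}. (\<Prod>k\<in>{Suc j..n'}. gq q (y (Suc j) - y (Suc k))) * gq q (y (Suc j) - y 1))"
    by (rule prod.cong) (auto simp: F)
  also have "\<dots> = (\<Prod>j\<in>{1..n'}. gq q (y (Suc j) - y 1)) * (\<Prod>j\<in>{1..n'}. \<Prod>k\<in>{Suc j..n'}. gq q (y (Suc j) - y (Suc k)))"
    by (simp add: prod.distrib mult.commute)
  also have "(\<Prod>j\<in>{1..n'}. gq q (y (Suc j) - y 1)) = (\<Prod>k\<in>{2..n}. gq q (y k - y 1))"
  proof -
    have e: "{2..n} = {Suc 1..Suc n'}" by (simp add: n)
    show ?thesis by (simp only: e prod.shift_bounds_cl_Suc_ivl)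
  qed
  also have "(\<Prod>j\<in>{1..n'}. \<Prod>k\<in>{Suc j..n'}. gq q (y (Suc j) - y (Suc k))) = (\<Prod>j\<in>{2..n}. \<Prod>k\<in>{Suc j..n}. gq q (y j - y k))"
  proof -
    have "(\<Prod>j\<in>{2..n}. \<Prod>k\<in>{Suc j..n}. gq q (y j - y k)) = (\<Prod>j\<in>{1..n'}. \<Prod>k\<in>{Suc (Suc j)..n}. gq q (y (Suc j) - y k))"
    proof -
      have e: "{2..n} = {Suc 1..Suc n'}" by (simp add: n)
      show ?thesis by (simp only: e prod.shift_bounds_cl_Suc_ivl)
    qed
    also have "\<dots> = (\<Prod>j\<in>{1..n'}. \<Prod>k\<in>{Suc j..n'}. gq q (y (Suc j) - y (Suc k)))"
      by (rule prod.cong[OF refl]) (simp only: n prod.shift_bounds_cl_Suc_ivl)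
    finally show ?thesis by simp
  qed
  finally show ?thesis .
qed

lemma C_split2:
  assumes "2 \<le> n"
  shows "C_a n y q = gq q (y 1 - y 2) * ((\<Prod>k\<in>{3..n}. gq q (y 1 - y k)) * (\<Prod>k\<in>{3..n}. gq q (y 2 - y k)))
     * (\<Prod>j\<in>{3..n}. \<Prod>k\<in>{Suc j..n}. gq q (y j - y k))"
proof -
  have "C_a n y q = (\<Prod>k\<in>{2..n}. gq q (y 1 - y k)) * (\<Prod>j\<in>{2..n}. \<Prod>k\<in>{Suc j..n}. gq q (y j - y k))"
    using assms by (simp add: C_split1)
  also have "(\<Prod>k\<in>{2..n}. gq q (y 1 - y k)) = gq q (y 1 - y 2) * (\<Prod>k\<in>{3..n}. gq q (y 1 - y k))"
    using assms by (simp add: prod.atLeast_Suc_atMost numeral_3_eq_3)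
  also have "(\<Prod>j\<in>{2..n}. \<Prod>k\<in>{Suc j..n}. gq q (y j - y k)) = (\<Prod>k\<in>{3..n}. gq q (y 2 - y k)) * (\<Prod>j\<in>{3..n}. \<Prod>k\<in>{Suc j..n}. gq q (y j - y k))"
    using assms by (simp add: prod.atLeast_Suc_atMost numeral_3_eq_3)
  finally show ?thesis by (simp add: ac_simps)
qed

lemma C_rot_bethe:
  assumes n2: "2 \<le> n" and q: "\<bar>q\<bar> < 1"
    and nd: "\<And>k. k \<in> {2..n} \<Longrightarrow> exp (\<i> * of_real (y 1 - y k)) \<noteq> 1"
    and be: "exp (\<i> * of_nat m * of_real (y 1)) = (-1) ^ (n - 1) * (\<Prod>k\<in>{2..n}. Bq q (y 1 - y k))"
  shows "C_a n (\<lambda>l. y (rinv n l)) q = exp (\<i> * of_nat m * of_real (y 1)) * C_a n y q"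
proof -
  have "(\<Prod>k\<in>{2..n}. gq q (y k - y 1)) = (\<Prod>k\<in>{2..n}. (-1) * (Bq q (y 1 - y k) * gq q (y 1 - y k)))"
  proof (rule prod.cong[OF refl])
    fix k assume "k \<in> {2..n}"
    from g_neg[OF nd[OF this] q] show "gq q (y k - y 1) = (-1) * (Bq q (y 1 - y k) * gq q (y 1 - y k))"
      by (simp add: minus_diff_eq)
  qed
  also have "\<dots> = (-1) ^ (n - 1) * (\<Prod>k\<in>{2..n}. Bq q (y 1 - y k)) * (\<Prod>k\<in>{2..n}. gq q (y 1 - y k))"
    unfolding prod.distrib prod_constant by simp
  finally have "(\<Prod>k\<in>{2..n}. gq q (y k - y 1)) = exp (\<i> * of_nat m * of_real (y 1)) * (\<Prod>k\<in>{2..n}. gq q (y 1 - y k))"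
    using be by simp
  then show ?thesis using n2 by (simp add: C_rot C_split1)
qed

lemma C_swap:
  assumes n2: "2 \<le> n"
  shows "C_a n (\<lambda>l. y (tsw l)) q = gq q (y 2 - y 1) * ((\<Prod>k\<in>{3..n}. gq q (y 1 - y k)) * (\<Prod>k\<in>{3..n}. gq q (y 2 - y k)))
     * (\<Prod>j\<in>{3..n}. \<Prod>k\<in>{Suc j..n}. gq q (y j - y k))"
proof -
  have a: "(\<Prod>k\<in>{3..n}. gq q (y (tsw 1) - y (tsw k))) = (\<Prod>k\<in>{3..n}. gq q (y 2 - y k))"
    by (rule prod.cong) (auto simp: tsw_def)
  have b: "(\<Prod>k\<in>{3..n}. gq q (y (tsw 2) - y (tsw k))) = (\<Prod>k\<in>{3..n}. gq q (y 1 - y k))"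
    by (rule prod.cong) (auto simp: tsw_def)
  have c: "(\<Prod>j\<in>{3..n}. \<Prod>k\<in>{Suc j..n}. gq q (y (tsw j) - y (tsw k))) = (\<Prod>j\<in>{3..n}. \<Prod>k\<in>{Suc j..n}. gq q (y j - y k))"
    by (intro prod.cong refl) (auto simp: tsw_def)
  show ?thesis
    using C_split2[OF n2, of "\<lambda>l. y (tsw l)" q] a b c by (simp add: tsw_def ac_simps)
qed

lemma sum_split_ends:
  fixes f :: "nat \<Rightarrow> 'a::comm_monoid_add"
  assumes "2 \<le> n"
  shows "(\<Sum>l=1..n. f l) = f 1 + f n + (\<Sum>l=2..n-1. f l)"
proof -
  obtain n' where n: "n = Suc n'" and n1: "1 \<le> n'" using assms by (cases n) auto
  have "(\<Sum>l=1..n. f l) = f 1 + (\<Sum>l=2..n. f l)"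
    using assms by (simp add: sum.atLeast_Suc_atMost numeral_2_eq_2)
  also have "(\<Sum>l=2..n. f l) = (\<Sum>l=2..n'. f l) + f n"
    using n1 by (simp add: n sum.cl_ivl_Suc numeral_2_eq_2)
  finally show ?thesis by (simp add: n ac_simps)
qed

definition Tf :: "nat \<Rightarrow> nat \<Rightarrow> (nat \<Rightarrow> real) \<Rightarrow> (nat \<Rightarrow> real) \<Rightarrow> real" where
  "Tf n m \<mu> y = real m * y 1 + (\<Sum>l=1..n. y (rinv n l) * \<mu> l)"

lemma Tf_swap:
  assumes n2: "2 \<le> n" and mu: "\<mu> 1 - \<mu> n = real m + 1"
  shows "Tf n m \<mu> (\<lambda>l. y (tsw l)) = Tf n m \<mu> y + (y 1 - y 2)"
proof -
  have r1: "rinv n 1 = 2" "rinv n n = 1" using n2 by (auto simp: rinv_def)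
  have mid: "(\<Sum>l=2..n-1. y (tsw (rinv n l)) * \<mu> l) = (\<Sum>l=2..n-1. y (rinv n l) * \<mu> l)"
    by (rule sum.cong) (auto simp: tsw_def rinv_def)
  have "Tf n m \<mu> (\<lambda>l. y (tsw l)) = real m * y 2 + (y 1 * \<mu> 1 + y 2 * \<mu> n + (\<Sum>l=2..n-1. y (rinv n l) * \<mu> l))"
    unfolding Tf_def sum_split_ends[OF n2, of "\<lambda>l. y (tsw (rinv n l)) * \<mu> l"] mid r1 by (simp add: tsw_def)
  moreover have "Tf n m \<mu> y = real m * y 1 + (y 2 * \<mu> 1 + y 1 * \<mu> n + (\<Sum>l=2..n-1. y (rinv n l) * \<mu> l))"
    unfolding Tf_def sum_split_ends[OF n2, of "\<lambda>l. y (rinv n l) * \<mu> l"] r1 by simp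
  ultimately show ?thesis
  proof -
    have "\<mu> 1 = \<mu> n + real m + 1" using mu by simp
    then show ?thesis using \<open>Tf n m \<mu> (\<lambda>l. y (tsw l)) = _\<close> \<open>Tf n m \<mu> y = _\<close>
      by (simp add: algebra_simps)
  qed
qed

definition Phi :: "nat \<Rightarrow> nat \<Rightarrow> real \<Rightarrow> (nat \<Rightarrow> real) \<Rightarrow> (nat \<Rightarrow> real) \<Rightarrow> complex" where
  "Phi n m q \<mu> y = C_a n y q * exp (\<i> * of_real (Tf n m \<mu> y)) * (1 - of_real q * exp (- \<i> * of_real (y 2 - y 1)))"

lemma Phi_swap:
  assumes n2: "2 \<le> n" and mu: "\<mu> 1 - \<mu> n = real m + 1"
    and nd: "exp (\<i> * of_real (y 1 - y 2)) \<noteq> 1"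
  shows "Phi n m q \<mu> (\<lambda>l. y (tsw l)) = - Phi n m q \<mu> y"
proof -
  define K where "K = ((\<Prod>k\<in>{3..n}. gq q (y 1 - y k)) * (\<Prod>k\<in>{3..n}. gq q (y 2 - y k)))
     * (\<Prod>j\<in>{3..n}. \<Prod>k\<in>{Suc j..n}. gq q (y j - y k))"
  define t where "t = y 1 - y 2"
  have C1: "C_a n (\<lambda>l. y (tsw l)) q = gq q (-t) * K"
    unfolding K_def t_def C_swap[OF n2] by (simp add: minus_diff_eq ac_simps)
  have C2: "C_a n y q = gq q t * K"
    unfolding K_def t_def C_split2[OF n2, of y] by (simp add: ac_simps)
  have E: "exp (\<i> * of_real (Tf n m \<mu> (\<lambda>l. y (tsw l)))) = exp (\<i> * of_real (Tf n m \<mu> y)) * exp (\<i> * of_real t)"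
    unfolding Tf_swap[OF n2 mu] t_def by (simp add: distrib_left exp_add)
  have sw: "(\<lambda>l. y (tsw l)) 2 - (\<lambda>l. y (tsw l)) 1 = t" "y 2 - y 1 = -t"
    by (auto simp: tsw_def t_def)
  have "Phi n m q \<mu> (\<lambda>l. y (tsw l)) = K * exp (\<i> * of_real (Tf n m \<mu> y)) *
      (gq q (-t) * exp (\<i> * of_real t) * (1 - of_real q * exp (- \<i> * of_real t)))"
    unfolding Phi_def C1 E sw by (simp add: ac_simps)
  also have "\<dots> = K * exp (\<i> * of_real (Tf n m \<mu> y)) * (- gq q t * (1 - of_real q * exp (- \<i> * of_real (-t))))"
    using g_swap[of t q] nd t_def by simp
  also have "\<dots> = - Phi n m q \<mu> y"
    unfolding Phi_def C2 sw by (simp add: ac_simps)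
  finally show ?thesis .
qed

lemma exp_i_diff: "exp (\<i> * of_real (a - b)) = exp (\<i> * of_real a) * exp (- \<i> * of_real b)"
  by (subst exp_add[symmetric]) (simp add: algebra_simps)


theorem mainTheorem8:
  fixes n m :: nat and q :: real and \<xi> \<mu> :: "nat \<Rightarrow> real"
  assumes "n \<ge> 2" and "m > 0" and "-1 < q" and "q < 1"
    and "\<forall>j\<in>{1..n}. \<forall>k\<in>{1..n}. j \<noteq> k \<longrightarrow> (\<forall>z::int. \<xi> j - \<xi> k \<noteq> 2 * pi * of_int z)"
    and "\<forall>j\<in>{1..n}. exp (\<i> * of_nat m * of_real (\<xi> j)) =
           (-1) ^ (n - 1) * (\<Prod>k\<in>{1..n} - {j}.
              (1 - of_real q * exp (\<i> * of_real (\<xi> j - \<xi> k))) /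
              (exp (\<i> * of_real (\<xi> j - \<xi> k)) - of_real q))"
    and "\<mu> \<in> weight_lattice n"
    and "\<mu> 1 - \<mu> n = real m + 1"
  shows "P_a n \<xi> q \<mu> =
    of_real q * P_a n \<xi> q (\<lambda>l. \<mu> l - (if l = 1 then 1 else 0) + (if l = n then 1 else 0))"
proof -
  note n2 = assms(1) and mu = assms(8)
  have qa: "\<bar>q\<bar> < 1" using assms(3,4) by auto
  let ?P = "{\<sigma>. \<sigma> permutes {1..n}}"
  define \<mu>' where "\<mu>' = (\<lambda>l. \<mu> l - (if l = 1 then 1 else 0) + (if l = n then 1 else 0))"
  define h where "h = (\<lambda>x. C_a n x q * exp (\<i> * of_real (\<Sum>l=1..n. x l * \<mu> l)) *
      (1 - of_real q * exp (- \<i> * of_real (x 1 - x n))))"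
  have n1: "1 \<in> {1..n}" "n \<in> {1..n}" "1 \<noteq> n" using n2 by auto
  have ND: "exp (\<i> * of_real (\<xi> (\<tau> j) - \<xi> (\<tau> k))) \<noteq> 1"
    if \<tau>: "\<tau> permutes {1..n}" and jk: "j \<in> {1..n}" "k \<in> {1..n}" "j \<noteq> k" for \<tau> j k
  proof
    assume "exp (\<i> * of_real (\<xi> (\<tau> j) - \<xi> (\<tau> k))) = 1"
    then obtain z :: int where "\<xi> (\<tau> j) - \<xi> (\<tau> k) = of_int (2 * z) * pi"
      unfolding exp_eq_1 by auto
    then have "\<xi> (\<tau> j) - \<xi> (\<tau> k) = 2 * pi * of_int z" by simp
    moreover have "\<tau> j \<in> {1..n}" "\<tau> k \<in> {1..n}" using jk by (simp_all only: permutes_in_image[OF \<tau>])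
    moreover have "\<tau> j \<noteq> \<tau> k" using jk(3) injD[OF permutes_inj[OF \<tau>]] by blast
    ultimately show False using assms(5) by blast
  qed
  have BE: "exp (\<i> * of_nat m * of_real (\<xi> (\<tau> 1))) =
      (-1) ^ (n - 1) * (\<Prod>k\<in>{2..n}. Bq q (\<xi> (\<tau> 1) - \<xi> (\<tau> k)))"
    if \<tau>: "\<tau> permutes {1..n}" for \<tau>
  proof -
    have t1: "\<tau> 1 \<in> {1..n}" using n1(1) by (simp only: permutes_in_image[OF \<tau>])
    have img: "{1..n} - {\<tau> 1} = \<tau> ` {2..n}"
    proof -
      have a: "\<tau> ` {1..n} = {1..n}" using permutes_image[OF \<tau>] .
      have b: "{1..n} = insert 1 {2..n}" using n2 by auto
      have c: "\<tau> 1 \<notin> \<tau> ` {2..n}"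
      proof
        assume "\<tau> 1 \<in> \<tau> ` {2..n}"
        then obtain k where k: "k \<in> {2..n}" "\<tau> 1 = \<tau> k" by blast
        then have "1 = k" using injD[OF permutes_inj[OF \<tau>]] by blast
        then show False using k by simp
      qed
      have e0: "\<tau> ` {1..n} = insert (\<tau> 1) (\<tau> ` {2..n})" unfolding b by (rule image_insert)
      have e: "{1..n} = insert (\<tau> 1) (\<tau> ` {2..n})" using e0 a by simp
      show ?thesis unfolding e using c by auto
    qed
    have inj: "inj_on \<tau> {2..n}" using permutes_inj[OF \<tau>] by (auto intro: inj_on_subset)
    show ?thesis
      using assms(6)[rule_format, OF t1] unfolding img prod.reindex[OF inj] Bq_def by (simp add: o_def)
  qed
  have sumA: "(\<Sum>l=1..n. x l * \<mu>' l) = (\<Sum>l=1..n. x l * \<mu> l) - (x 1 - x n)" for x :: "nat \<Rightarrow> real"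
  proof -
    have "(\<Sum>l=1..n. x l * \<mu>' l) = (\<Sum>l=1..n. x l * \<mu> l - (if l = 1 then x l else 0) + (if l = n then x l else 0))"
      by (rule sum.cong) (auto simp: \<mu>'_def algebra_simps)
    also have "\<dots> = (\<Sum>l=1..n. x l * \<mu> l) - (x 1 - x n)"
      using n1 by (simp add: sum.distrib sum_subtractf)
    finally show ?thesis .
  qed
  have A: "P_a n \<xi> q \<mu> - of_real q * P_a n \<xi> q \<mu>' = (\<Sum>\<sigma>\<in>?P. h (\<lambda>l. \<xi> (\<sigma> l)))"
    unfolding P_a_def sum_distrib_left sum_subtractf[symmetric]
  proof (rule sum.cong[OF refl])
    fix \<sigma> :: "nat \<Rightarrow> nat"
    let ?x = "\<lambda>l. \<xi> (\<sigma> l)"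
    have "exp (\<i> * of_real (\<Sum>l=1..n. ?x l * \<mu>' l)) = exp (\<i> * of_real (\<Sum>l=1..n. ?x l * \<mu> l)) * exp (- \<i> * of_real (?x 1 - ?x n))"
      unfolding sumA by (rule exp_i_diff)
    then show "C_a n ?x q * exp (\<i> * of_real (\<Sum>l=1..n. ?x l * \<mu> l)) -
        of_real q * (C_a n ?x q * exp (\<i> * of_real (\<Sum>l=1..n. ?x l * \<mu>' l))) = h ?x"
      unfolding h_def by (simp add: algebra_simps)
  qed
  have B: "(\<Sum>\<sigma>\<in>?P. h (\<lambda>l. \<xi> (\<sigma> l))) = (\<Sum>\<tau>\<in>?P. h (\<lambda>l. \<xi> (\<tau> (rinv n l))))"
    using sum_permutations_compose_right[OF rinv_permutes[OF n2], of "\<lambda>\<sigma>. h (\<lambda>l. \<xi> (\<sigma> l))"]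
    by (simp add: o_def)
  have C: "h (\<lambda>l. \<xi> (\<tau> (rinv n l))) = Phi n m q \<mu> (\<lambda>l. \<xi> (\<tau> l))" if \<tau>: "\<tau> \<in> ?P" for \<tau>
  proof -
    define y where "y = (\<lambda>l. \<xi> (\<tau> l))"
    have \<tau>': "\<tau> permutes {1..n}" using \<tau> by simp
    have nd: "exp (\<i> * of_real (y 1 - y k)) \<noteq> 1" if "k \<in> {2..n}" for k
      using ND[OF \<tau>', of 1 k] that n1 unfolding y_def by auto
    have Cr: "C_a n (\<lambda>l. y (rinv n l)) q = exp (\<i> * of_nat m * of_real (y 1)) * C_a n y q"
    proof (rule C_rot_bethe[where y=y and m=m and n=n and q=q])
      show "exp (\<i> * of_nat m * of_real (y 1)) = (-1) ^ (n - 1) * (\<Prod>k\<in>{2..n}. Bq q (y 1 - y k))"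
        unfolding y_def by (rule BE[OF \<tau>'])
    qed (use n2 qa nd in auto)
    have r1: "rinv n 1 = 2" "rinv n n = 1" using n2 by (auto simp: rinv_def)
    have "h (\<lambda>l. y (rinv n l)) = Phi n m q \<mu> y"
      unfolding h_def Phi_def Tf_def Cr r1
      by (simp add: distrib_left exp_add ac_simps)
    then show ?thesis by (simp add: y_def)
  qed
  have D: "(\<Sum>\<tau>\<in>?P. Phi n m q \<mu> (\<lambda>l. \<xi> (\<tau> l))) = 0"
  proof -
    have "(\<Sum>\<tau>\<in>?P. Phi n m q \<mu> (\<lambda>l. \<xi> (\<tau> l))) = (\<Sum>\<tau>\<in>?P. Phi n m q \<mu> (\<lambda>l. \<xi> (\<tau> (tsw l))))"
      using sum_permutations_compose_right[OF tsw_permutes[OF n2], of "\<lambda>\<sigma>. Phi n m q \<mu> (\<lambda>l. \<xi> (\<sigma> l))"]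
      by (simp add: o_def)
    also have "\<dots> = (\<Sum>\<tau>\<in>?P. - Phi n m q \<mu> (\<lambda>l. \<xi> (\<tau> l)))"
    proof (rule sum.cong[OF refl])
      fix \<tau> assume "\<tau> \<in> ?P"
      then have \<tau>': "\<tau> permutes {1..n}" by simp
      have "exp (\<i> * of_real (\<xi> (\<tau> 1) - \<xi> (\<tau> 2))) \<noteq> 1"
        using ND[OF \<tau>', of 1 2] n2 by auto
      from Phi_swap[OF n2 mu, of "\<lambda>l. \<xi> (\<tau> l)", OF this]
      show "Phi n m q \<mu> (\<lambda>l. \<xi> (\<tau> (tsw l))) = - Phi n m q \<mu> (\<lambda>l. \<xi> (\<tau> l))" by simp
    qed
    also have "\<dots> = - (\<Sum>\<tau>\<in>?P. Phi n m q \<mu> (\<lambda>l. \<xi> (\<tau> l)))" by (simp add: sum_negf)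
    finally show ?thesis by simp
  qed
  have "P_a n \<xi> q \<mu> - of_real q * P_a n \<xi> q \<mu>' = 0"
  proof -
    have "(\<Sum>\<tau>\<in>?P. h (\<lambda>l. \<xi> (\<tau> (rinv n l)))) = (\<Sum>\<tau>\<in>?P. Phi n m q \<mu> (\<lambda>l. \<xi> (\<tau> l)))"
      by (rule sum.cong[OF refl]) (rule C)
    then show ?thesis unfolding A B D .
  qed
  then show ?thesis unfolding \<mu>'_def by simp
qed


end
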